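(* Assume the setting described in the context. For every $W\in\mathrm{Stab}_\pi$, the sequence $\varphi_W$ is strongly stable.
   Context: Setting: $\Omega$ is a finite set and $F$ a finite set of flaws, each a nonempty subset of $\Omega$; $F_\sigma=\{f:\sigma\in f\}$. For $\sigma\in\Omega$ and $f\in F_\sigma$ there is a probability distribution $\rho(\cdot\mid f,\sigma)$ with support $A(f,\sigma)$. A walk is $\sigma_1\xrightarrow{w_1}\sigma_2\cdots\xrightarrow{w_t}\sigma_{t+1}$ with $w_i\in F_{\sigma_i}$ and $\sigma_{i+1}\in A(w_i,\sigma_i)$, with word $w_1\ldots w_t$. $\sim$ is a symmetric relation on $F$ (loops allowed), with $\Gamma(f)=\{g:f\sim g\}$, $\Gamma^+(f)=\Gamma(f)\cup\{f\}$ and unions over sets $\Gamma(S)$, $\Gamma^+(S)$. It is assumed that $(F,\sim)$ is a potential causality graph: for every step $\sigma\xrightarrow{f}\sigma'$, $F_{\sigma'}\subseteq(F_\sigma\setminus\{f\})\cup\Gamma(f)$. $S$ is independent if $f\not\sim g$ for distinct $f,g\in S$; $\mathrm{Ind}(F)$ is the family of independent sets. A sequence $(I_1,\ldots,I_s)$, $s\ge1$, is stable if $I_r\in\mathrm{Ind}(F)$ and $I_{r+1}\subseteq\Gamma^+(I_r)$. A word $W$ is stable if $W=W_1\ldots W_s$ (a unique partition) with nonempty words $W_r$ of distinct flaws whose flaw sets $I_r$ form a stable sequence. Then $\varphi_W=(I_1,\ldots,I_s)$, and $\varphi_W=(\varnothing)$ for the empty word. $W$ is $\pi$-stable if in addition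 each $W_r$ is strictly increasing in the order induced by a permutation $\pi$ of $F$. $\mathrm{Stab}_\pi$ is the set of $\pi$-stable words $W$ such that some walk has word $W$ or the reverse of $W$. A sequence $(I_1,\ldots,I_s)$ with $s\ge1$ is strongly stable if $I_r\in\mathrm{Ind}(F)$ for all $r$, $I_{r+1}\subseteq\Gamma(I_r)$ for $r\in[s-1]$, and $I_r\ne\varnothing$ for $r\in[2,s]$. *)

theory Defs
  imports "HOL-Probability.Probability_Mass_Function"
begin

(* Flaws are subsets of the state space; states have type 'a, flaws type 'a set. *)

definition Fsig :: "'a set set \<Rightarrow> 'a \<Rightarrow> 'a set set" where
  "Fsig F \<sigma> = {f \<in> F. \<sigma> \<in> f}"

definition Gam :: "'a set set \<Rightarrow> ('a set \<Rightarrow> 'a set \<Rightarrow> bool) \<Rightarrow> 'a set \<Rightarrow> 'a set set" where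
  "Gam F sim f = {g \<in> F. sim f g}"

definition GamS :: "'a set set \<Rightarrow> ('a set \<Rightarrow> 'a set \<Rightarrow> bool) \<Rightarrow> 'a set set \<Rightarrow> 'a set set" where
  "GamS F sim S = (\<Union>f\<in>S. Gam F sim f)"

definition GamP :: "'a set set \<Rightarrow> ('a set \<Rightarrow> 'a set \<Rightarrow> bool) \<Rightarrow> 'a set set \<Rightarrow> 'a set set" where
  "GamP F sim S = GamS F sim S \<union> S"

definition indep :: "'a set set \<Rightarrow> ('a set \<Rightarrow> 'a set \<Rightarrow> bool) \<Rightarrow> 'a set set \<Rightarrow> bool" where
  "indep F sim S \<longleftrightarrow> S \<subseteq> F \<and> (\<forall>f\<in>S. \<forall>g\<in>S. f \<noteq> g \<longrightarrow> \<not> sim f g)"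

definition stable_seq :: "'a set set \<Rightarrow> ('a set \<Rightarrow> 'a set \<Rightarrow> bool) \<Rightarrow> 'a set set list \<Rightarrow> bool" where
  "stable_seq F sim Is \<longleftrightarrow> Is \<noteq> [] \<and> (\<forall>I\<in>set Is. indep F sim I) \<and>
     (\<forall>r. Suc r < length Is \<longrightarrow> Is ! Suc r \<subseteq> GamP F sim (Is ! r))"

definition strongly_stable :: "'a set set \<Rightarrow> ('a set \<Rightarrow> 'a set \<Rightarrow> bool) \<Rightarrow> 'a set set list \<Rightarrow> bool" where
  "strongly_stable F sim Is \<longleftrightarrow> Is \<noteq> [] \<and> (\<forall>I\<in>set Is. indep F sim I) \<and>
     (\<forall>r. Suc r < length Is \<longrightarrow> Is ! Suc r \<subseteq> GamS F sim (Is ! r)) \<and>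
     (\<forall>r. 0 < r \<and> r < length Is \<longrightarrow> Is ! r \<noteq> {})"

definition stable_partition :: "'a set set \<Rightarrow> ('a set \<Rightarrow> 'a set \<Rightarrow> bool) \<Rightarrow> 'a set list \<Rightarrow> 'a set list list \<Rightarrow> bool" where
  "stable_partition F sim W Ws \<longleftrightarrow> concat Ws = W \<and> (\<forall>B\<in>set Ws. B \<noteq> [] \<and> distinct B) \<and>
     stable_seq F sim (map set Ws)"

definition stable_word :: "'a set set \<Rightarrow> ('a set \<Rightarrow> 'a set \<Rightarrow> bool) \<Rightarrow> 'a set list \<Rightarrow> bool" where
  "stable_word F sim W \<longleftrightarrow> (\<exists>Ws. stable_partition F sim W Ws)"

definition phi :: "'a set set \<Rightarrow> ('a set \<Rightarrow> 'a set \<Rightarrow> bool) \<Rightarrow> 'a set list \<Rightarrow> 'a set set list" where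
  "phi F sim W = (if W = [] then [{}] else map set (THE Ws. stable_partition F sim W Ws))"

definition pi_stable :: "'a set set \<Rightarrow> ('a set \<Rightarrow> 'a set \<Rightarrow> bool) \<Rightarrow> ('a set \<Rightarrow> nat) \<Rightarrow> 'a set list \<Rightarrow> bool" where
  "pi_stable F sim \<pi> W \<longleftrightarrow> (\<exists>Ws. stable_partition F sim W Ws \<and>
     (\<forall>B\<in>set Ws. sorted_wrt (\<lambda>f g. \<pi> f < \<pi> g) B))"

(* walk sigma_1 -w_1-> sigma_2 ... -w_t-> sigma_{t+1}, with A(f,sigma) = support of rho(.|f,sigma) *)
definition is_walk :: "'a set \<Rightarrow> 'a set set \<Rightarrow> ('a set \<Rightarrow> 'a \<Rightarrow> 'a pmf) \<Rightarrow> 'a list \<Rightarrow> 'a set list \<Rightarrow> bool" where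
  "is_walk \<Omega> F \<rho> \<sigma>s ws \<longleftrightarrow> length \<sigma>s = Suc (length ws) \<and> \<sigma>s ! 0 \<in> \<Omega> \<and>
     (\<forall>i < length ws. ws ! i \<in> Fsig F (\<sigma>s ! i) \<and> \<sigma>s ! Suc i \<in> set_pmf (\<rho> (ws ! i) (\<sigma>s ! i)))"

definition Stab :: "'a set \<Rightarrow> 'a set set \<Rightarrow> ('a set \<Rightarrow> 'a \<Rightarrow> 'a pmf) \<Rightarrow> ('a set \<Rightarrow> 'a set \<Rightarrow> bool)
     \<Rightarrow> ('a set \<Rightarrow> nat) \<Rightarrow> 'a set list set" where
  "Stab \<Omega> F \<rho> sim \<pi> = {W. pi_stable F sim \<pi> W \<and>
     (\<exists>\<sigma>s. is_walk \<Omega> F \<rho> \<sigma>s W \<or> is_walk \<Omega> F \<rho> \<sigma>s (rev W))}"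

end

theory Submission
  imports Defs
begin

lemma walk_states:
  assumes w: "is_walk \<Omega> F \<rho> \<sigma>s ws"
    and a4: "\<forall>\<sigma>\<in>\<Omega>. \<forall>f\<in>Fsig F \<sigma>. set_pmf (\<rho> f \<sigma>) \<subseteq> \<Omega>"
  shows "k \<le> length ws \<Longrightarrow> \<sigma>s ! k \<in> \<Omega>"
proof (induction k)
  case 0 then show ?case using w by (simp add: is_walk_def)
next
  case (Suc k)
  then have "\<sigma>s ! k \<in> \<Omega>" by simp
  moreover have "ws ! k \<in> Fsig F (\<sigma>s ! k)" "\<sigma>s ! Suc k \<in> set_pmf (\<rho> (ws ! k) (\<sigma>s ! k))"
    using w Suc.prems by (auto simp: is_walk_def)
  ultimately show ?case using a4 by blast
qed

lemma no_return_idx: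
  assumes w: "is_walk \<Omega> F \<rho> \<sigma>s ws"
    and a4: "\<forall>\<sigma>\<in>\<Omega>. \<forall>f\<in>Fsig F \<sigma>. set_pmf (\<rho> f \<sigma>) \<subseteq> \<Omega>"
    and a6: "\<forall>\<sigma>\<in>\<Omega>. \<forall>f\<in>Fsig F \<sigma>. \<forall>\<sigma>'\<in>set_pmf (\<rho> f \<sigma>).
           Fsig F \<sigma>' \<subseteq> (Fsig F \<sigma> - {f}) \<union> Gam F sim f"
    and ij: "i < j" "j < length ws" and gi: "ws ! i = g" and gj: "ws ! j = g"
    and gg: "\<not> sim g g"
    and mid: "\<forall>k. i < k \<and> k < j \<longrightarrow> ws ! k \<noteq> g \<and> \<not> sim (ws ! k) g"
  shows False
proof -
  have step: "\<And>k. k < length ws \<Longrightarrow> Fsig F (\<sigma>s ! Suc k) \<subseteq> (Fsig F (\<sigma>s ! k) - {ws ! k}) \<union> Gam F sim (ws ! k)"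
  proof -
    fix k assume k: "k < length ws"
    have "\<sigma>s ! k \<in> \<Omega>" using walk_states[OF w a4] k by simp
    moreover have "ws ! k \<in> Fsig F (\<sigma>s ! k)" "\<sigma>s ! Suc k \<in> set_pmf (\<rho> (ws ! k) (\<sigma>s ! k))"
      using w k by (auto simp: is_walk_def)
    ultimately show "Fsig F (\<sigma>s ! Suc k) \<subseteq> (Fsig F (\<sigma>s ! k) - {ws ! k}) \<union> Gam F sim (ws ! k)"
      using a6 by blast
  qed
  have "\<forall>d. Suc i + d \<le> j \<longrightarrow> g \<notin> Fsig F (\<sigma>s ! (Suc i + d))"
  proof
    fix d show "Suc i + d \<le> j \<longrightarrow> g \<notin> Fsig F (\<sigma>s ! (Suc i + d))"
    proof (induction d)
      case 0
      have "i < length ws" using ij by simp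
      have "g \<notin> Gam F sim g" using gg by (simp add: Gam_def)
      with step[OF \<open>i < length ws\<close>] gi show ?case by auto
    next
      case (Suc d)
      show ?case
      proof
        assume le: "Suc i + Suc d \<le> j"
        let ?k = "Suc i + d"
        have k: "?k < length ws" "i < ?k" "?k < j" using le ij by auto
        have IH: "g \<notin> Fsig F (\<sigma>s ! ?k)" using Suc le by simp
        have "ws ! ?k \<noteq> g" "\<not> sim (ws ! ?k) g" using mid k by auto
        have "g \<notin> Gam F sim (ws ! ?k)" using \<open>\<not> sim (ws ! ?k) g\<close> by (simp add: Gam_def)
        with step[OF k(1)] IH have "g \<notin> Fsig F (\<sigma>s ! Suc ?k)" by blast
        then show "g \<notin> Fsig F (\<sigma>s ! (Suc i + Suc d))" by simp
      qed
    qed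
  qed
  then have "Suc i + (j - Suc i) \<le> j \<longrightarrow> g \<notin> Fsig F (\<sigma>s ! (Suc i + (j - Suc i)))" by blast
  moreover have "Suc i + (j - Suc i) = j" using ij by simp
  ultimately have "g \<notin> Fsig F (\<sigma>s ! j)" by simp
  moreover have "ws ! j \<in> Fsig F (\<sigma>s ! j)" using w ij by (auto simp: is_walk_def)
  ultimately show False using gj by simp
qed

lemma no_return_list:
  assumes w: "is_walk \<Omega> F \<rho> \<sigma>s (A @ g # M @ g # R)"
    and a4: "\<forall>\<sigma>\<in>\<Omega>. \<forall>f\<in>Fsig F \<sigma>. set_pmf (\<rho> f \<sigma>) \<subseteq> \<Omega>"
    and a6: "\<forall>\<sigma>\<in>\<Omega>. \<forall>f\<in>Fsig F \<sigma>. \<forall>\<sigma>'\<in>set_pmf (\<rho> f \<sigma>).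
           Fsig F \<sigma>' \<subseteq> (Fsig F \<sigma> - {f}) \<union> Gam F sim f"
    and gg: "\<not> sim g g"
    and mid: "\<forall>x\<in>set M. x \<noteq> g \<and> \<not> sim x g"
  shows False
proof (rule no_return_idx[OF w a4 a6, of "length A" "length A + Suc (length M)" g])
  show "length A < length A + Suc (length M)" by simp
  show "length A + Suc (length M) < length (A @ g # M @ g # R)" by simp
  show "(A @ g # M @ g # R) ! length A = g" by simp
  show "(A @ g # M @ g # R) ! (length A + Suc (length M)) = g"
    by (simp add: nth_append)
  show "\<not> sim g g" by fact
  show "\<forall>k. length A < k \<and> k < length A + Suc (length M) \<longrightarrow>
      (A @ g # M @ g # R) ! k \<noteq> g \<and> \<not> sim ((A @ g # M @ g # R) ! k) g"
  proof (intro allI impI)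
    fix k assume k: "length A < k \<and> k < length A + Suc (length M)"
    then obtain m where m: "k = length A + Suc m" "m < length M"
      by (metis add_Suc_right add_less_cancel_left less_imp_Suc_add not_less_eq)
    have "(A @ g # M @ g # R) ! k = M ! m" using m by (simp add: nth_append)
    moreover have "M ! m \<in> set M" using m by simp
    ultimately show "(A @ g # M @ g # R) ! k \<noteq> g \<and> \<not> sim ((A @ g # M @ g # R) ! k) g"
      using mid by simp
  qed
qed

lemma stable_seq_Cons2:
  "stable_seq F sim (I # J # Is) = (indep F sim I \<and> J \<subseteq> GamP F sim I \<and> stable_seq F sim (J # Is))"
proof
  assume h: "stable_seq F sim (I # J # Is)"
  have "\<forall>r. Suc r < length (J # Is) \<longrightarrow> (J # Is) ! Suc r \<subseteq> GamP F sim ((J # Is) ! r)"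
  proof (intro allI impI)
    fix r assume "Suc r < length (J # Is)"
    then show "(J # Is) ! Suc r \<subseteq> GamP F sim ((J # Is) ! r)"
      using h unfolding stable_seq_def by (metis Suc_less_eq length_Cons nth_Cons_Suc)
  qed
  then show "indep F sim I \<and> J \<subseteq> GamP F sim I \<and> stable_seq F sim (J # Is)"
    using h unfolding stable_seq_def by force
next
  assume h: "indep F sim I \<and> J \<subseteq> GamP F sim I \<and> stable_seq F sim (J # Is)"
  show "stable_seq F sim (I # J # Is)"
    unfolding stable_seq_def
  proof (intro conjI allI impI)
    fix r assume r: "Suc r < length (I # J # Is)"
    show "(I # J # Is) ! Suc r \<subseteq> GamP F sim ((I # J # Is) ! r)"
    proof (cases r)
      case 0 then show ?thesis using h by simp
    next
      case (Suc r')
      then show ?thesis using h r unfolding stable_seq_def by simp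
    qed
  qed (use h in \<open>auto simp: stable_seq_def\<close>)
qed

lemma first_block_not_shorter:
  assumes "stable_partition F sim (B @ X) (B # Ws)"
    and "stable_partition F sim (B' @ X') (B' # Ws')"
    and eq: "B @ X = B' @ X'" and len: "length B < length B'"
  shows False
proof -
  from len eq obtain x Y where B': "B' = B @ x # Y"
    by (metis append_eq_append_conv_if append_take_drop_id id_take_nth_drop le_refl
        length_append not_add_less1 take_all_iff)
  have dB': "distinct B'" using assms(2) by (simp add: stable_partition_def)
  have indB': "indep F sim (set B')" using assms(2) by (simp add: stable_partition_def stable_seq_def)
  have X: "X = x # Y @ X'" using eq B' by simp
  have "concat Ws = X" using assms(1) by (simp add: stable_partition_def)
  then obtain C Ws1 where Ws: "Ws = C # Ws1" using X by (cases Ws) auto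
  have Cne: "C \<noteq> []" using assms(1) Ws by (simp add: stable_partition_def)
  then have "hd C = x" using \<open>concat Ws = X\<close> X Ws by (cases C) auto
  then have xC: "x \<in> set C" using Cne hd_in_set by blast
  have "set C \<subseteq> GamP F sim (set B)" using assms(1) Ws
    by (simp add: stable_partition_def stable_seq_Cons2)
  with xC have "x \<in> GamS F sim (set B) \<or> x \<in> set B" by (auto simp: GamP_def)
  moreover have "x \<notin> set B" using dB' B' by simp
  ultimately obtain b where b: "b \<in> set B" "sim b x" by (auto simp: GamS_def Gam_def)
  have "b \<noteq> x" using b \<open>x \<notin> set B\<close> by auto
  moreover have "b \<in> set B'" "x \<in> set B'" using B' b by auto
  ultimately show False using indB' b by (auto simp: indep_def)
qed

lemma stable_partition_unique:
  "stable_partition F sim W Ws \<Longrightarrow> stable_partition F sim W Ws' \<Longrightarrow> Ws = Ws'"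
proof (induction Ws arbitrary: W Ws')
  case Nil then show ?case by (simp add: stable_partition_def stable_seq_def)
next
  case (Cons B Ws)
  from Cons.prems(2) obtain B' Ws1 where Ws': "Ws' = B' # Ws1"
    by (cases Ws') (auto simp: stable_partition_def stable_seq_def)
  have W1: "W = B @ concat Ws" using Cons.prems(1) by (simp add: stable_partition_def)
  have W2: "W = B' @ concat Ws1" using Cons.prems(2) Ws' by (simp add: stable_partition_def)
  have P1: "stable_partition F sim (B @ concat Ws) (B # Ws)" using Cons.prems(1) W1 by simp
  have P2: "stable_partition F sim (B' @ concat Ws1) (B' # Ws1)" using Cons.prems(2) W2 Ws' by simp
  have E: "B @ concat Ws = B' @ concat Ws1" using W1 W2 by simp
  have "\<not> length B < length B'"
    using first_block_not_shorter[OF P1 P2 E] by blast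
  moreover have "\<not> length B' < length B"
    using first_block_not_shorter[OF P2 P1 E[symmetric]] by blast
  ultimately have "length B = length B'" by simp
  with E have BB: "B = B'" and cc: "concat Ws = concat Ws1" by auto
  have ne1: "\<forall>X\<in>set Ws. X \<noteq> []" using Cons.prems(1) by (simp add: stable_partition_def)
  have ne2: "\<forall>X\<in>set Ws1. X \<noteq> []" using Cons.prems(2) Ws' by (simp add: stable_partition_def)
  have cnil: "(concat Ws = []) = (Ws = [])" using ne1 by simp
  have cnil1: "(concat Ws1 = []) = (Ws1 = [])" using ne2 by simp
  note pr1 = Cons.prems(1) and pr2 = Cons.prems(2) and IH = Cons.IH
  show ?case
  proof (cases Ws)
    case Nil
    then have "Ws1 = []" using cc cnil cnil1 by simp
    then show ?thesis using Nil BB Ws' by simp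
  next
    case (Cons C Ws2)
    then have "Ws1 \<noteq> []" using cc cnil cnil1 by force
    then obtain C' Ws3 where Ws1: "Ws1 = C' # Ws3" by (cases Ws1) auto
    have "stable_partition F sim (concat Ws) Ws"
      using pr1 \<open>Ws = C # Ws2\<close> by (simp add: stable_partition_def stable_seq_Cons2)
    moreover have "stable_partition F sim (concat Ws) Ws1"
      using pr2 Ws' Ws1 cc by (simp add: stable_partition_def stable_seq_Cons2)
    ultimately have "Ws = Ws1" using IH by blast
    then show ?thesis using BB Ws' by simp
  qed
qed

theorem proposition9:
  fixes \<Omega> :: "'a set" and F :: "'a set set" and \<rho> :: "'a set \<Rightarrow> 'a \<Rightarrow> 'a pmf"
    and sim :: "'a set \<Rightarrow> 'a set \<Rightarrow> bool" and \<pi> :: "'a set \<Rightarrow> nat" and W :: "'a set list"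
  assumes "finite \<Omega>" and "finite F"
    and "\<forall>f\<in>F. f \<noteq> {} \<and> f \<subseteq> \<Omega>"
    and a4: "\<forall>\<sigma>\<in>\<Omega>. \<forall>f\<in>Fsig F \<sigma>. set_pmf (\<rho> f \<sigma>) \<subseteq> \<Omega>"
    and "\<forall>f g. sim f g \<longrightarrow> sim g f"
    and a6: "\<forall>\<sigma>\<in>\<Omega>. \<forall>f\<in>Fsig F \<sigma>. \<forall>\<sigma>'\<in>set_pmf (\<rho> f \<sigma>).
           Fsig F \<sigma>' \<subseteq> (Fsig F \<sigma> - {f}) \<union> Gam F sim f"
    and "bij_betw \<pi> F {..<card F}"
    and "W \<in> Stab \<Omega> F \<rho> sim \<pi>"
  shows "strongly_stable F sim (phi F sim W)"
proof (cases "W = []")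
  case True
  then show ?thesis by (auto simp: phi_def strongly_stable_def indep_def)
next
  case False
  from assms(8) obtain Ws \<sigma>s where sp: "stable_partition F sim W Ws"
    and walk: "is_walk \<Omega> F \<rho> \<sigma>s W \<or> is_walk \<Omega> F \<rho> \<sigma>s (rev W)"
    by (auto simp: Stab_def pi_stable_def)
  have "(THE Ws. stable_partition F sim W Ws) = Ws"
    using sp stable_partition_unique by blast
  then have phi: "phi F sim W = map set Ws" using False by (simp add: phi_def)
  have ss: "stable_seq F sim (map set Ws)" and cW: "concat Ws = W"
    and blk: "\<forall>B\<in>set Ws. B \<noteq> [] \<and> distinct B"
    using sp by (auto simp: stable_partition_def)
  have ind: "\<And>r. r < length Ws \<Longrightarrow> indep F sim (set (Ws ! r))"
    using ss by (auto simp: stable_seq_def)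
  have dis: "\<And>r. r < length Ws \<Longrightarrow> distinct (Ws ! r)" using blk by auto
  have gam: "\<And>r. Suc r < length Ws \<Longrightarrow> set (Ws ! Suc r) \<subseteq> GamS F sim (set (Ws ! r))"
  proof
    fix r g assume r: "Suc r < length Ws" and g: "g \<in> set (Ws ! Suc r)"
    have "set (Ws ! Suc r) \<subseteq> GamP F sim (set (Ws ! r))" using ss r by (auto simp: stable_seq_def)
    with g have "g \<in> GamS F sim (set (Ws ! r)) \<or> g \<in> set (Ws ! r)" by (auto simp: GamP_def)
    then show "g \<in> GamS F sim (set (Ws ! r))"
    proof
      assume gr: "g \<in> set (Ws ! r)"
      show ?thesis
      proof (rule ccontr)
        assume ng: "g \<notin> GamS F sim (set (Ws ! r))"
        have "g \<in> F" using ind[of r] r gr by (auto simp: indep_def)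
        then have gg: "\<not> sim g g" using ng gr by (auto simp: GamS_def Gam_def)
        obtain p1 s1 where B1: "Ws ! r = p1 @ g # s1" using gr by (meson split_list)
        obtain p2 s2 where B2: "Ws ! Suc r = p2 @ g # s2" using g by (meson split_list)
        have "Ws = take r Ws @ Ws ! r # drop (Suc r) Ws" using r by (simp add: id_take_nth_drop)
        moreover have "drop (Suc r) Ws = Ws ! Suc r # drop (Suc (Suc r)) Ws"
          using r by (simp add: Cons_nth_drop_Suc)
        ultimately have "Ws = take r Ws @ Ws ! r # Ws ! Suc r # drop (Suc (Suc r)) Ws" by simp
        then have "W = concat (take r Ws) @ (p1 @ g # s1) @ (p2 @ g # s2) @ concat (drop (Suc (Suc r)) Ws)"
          using cW B1 B2 by (metis concat.simps(2) concat_append)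
        then have Weq: "W = concat (take r Ws) @ p1 @ g # (s1 @ p2) @ g # (s2 @ concat (drop (Suc (Suc r)) Ws))"
          by simp
        have mid: "\<forall>x\<in>set (s1 @ p2). x \<noteq> g \<and> \<not> sim x g"
        proof
          fix x assume x: "x \<in> set (s1 @ p2)"
          show "x \<noteq> g \<and> \<not> sim x g"
          proof (cases "x \<in> set s1")
            case True
            have "x \<noteq> g" using dis[of r] r B1 True by auto
            moreover have "x \<in> set (Ws ! r)" using B1 True by simp
            ultimately show ?thesis using ind[of r] r gr by (auto simp: indep_def)
          next
            case False
            then have xp: "x \<in> set p2" using x by simp
            have "x \<noteq> g" using dis[of "Suc r"] r B2 xp by auto
            moreover have "x \<in> set (Ws ! Suc r)" using B2 xp by simp
            ultimately show ?thesis using ind[of "Suc r"] r g by (auto simp: indep_def)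
          qed
        qed
        have mid': "\<forall>x\<in>set (rev (s1 @ p2)). x \<noteq> g \<and> \<not> sim x g" using mid by auto
        from walk show False
        proof
          assume "is_walk \<Omega> F \<rho> \<sigma>s W"
          then show False using no_return_list[OF _ a4 a6 gg mid] Weq
            by (metis append.assoc)
        next
          assume "is_walk \<Omega> F \<rho> \<sigma>s (rev W)"
          moreover have "rev W = rev (s2 @ concat (drop (Suc (Suc r)) Ws)) @ g # rev (s1 @ p2) @ g # rev (concat (take r Ws) @ p1)"
            using Weq by simp
          ultimately show False using no_return_list[OF _ a4 a6 gg mid'] by metis
        qed
      qed
    qed simp
  qed
  show ?thesis unfolding phi strongly_stable_def
  proof (intro conjI allI impI)
    show "map set Ws \<noteq> []" using ss by (simp add: stable_seq_def)
    show "\<forall>I\<in>set (map set Ws). indep F sim I" using ss by (simp add: stable_seq_def)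
  next
    fix r assume "Suc r < length (map set Ws)"
    then show "map set Ws ! Suc r \<subseteq> GamS F sim (map set Ws ! r)" using gam by simp
  next
    fix r assume "0 < r \<and> r < length (map set Ws)"
    then show "map set Ws ! r \<noteq> {}" using blk by simp
  qed
qed

end
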